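(* Let $\mathbb{X}$ be a finite alphabet and let $\Gamma$ be a Yang-Kieffer minimal grammar transform, i.e. $\Gamma(w)\in\mathcal{G}(w)$, $|\Gamma(w)|=\min_{\mathsf{G}\in\mathcal{G}(w)}|\mathsf{G}|$, and $\alpha_i\neq\lambda$ for every secondary rule $A_i\to\alpha_i$ of $\Gamma(w)$. Then for any strings $u,v\in\mathbb{X}^*$ and $w=uv$, $$0\le|\Gamma(u)|+|\Gamma(v)|-|\Gamma(w)|\le \mathrm{V}[\Gamma(w)]\,\mathbf{L}(w).$$
   Context: $\mathbb{X}^*$ is the set of all finite strings over $\mathbb{X}$ including the empty string $\lambda$. An admissible grammar is a tuple $\mathsf{G}=(\alpha_1,\dots,\alpha_n)$ standing for rules $A_i\to\alpha_i$ with start symbol $A_1$ and secondary nonterminals $A_2,\dots,A_n$, where $\alpha_i\in(\{A_{i+1},\dots,A_n\}\cup\mathbb{X})^*$; it generates exactly one string. $\mathcal{G}(w)$ is the set of admissible grammars generating $w$, $\mathrm{V}[\mathsf{G}]:=n$, and the Yang-Kieffer length is $|\mathsf{G}|:=\sum_i|\alpha_i|$. $\mathbf{L}(w):=\max\{|s|: w=x_1sy_1=x_2sy_2,\ x_1\neq x_2\}$ with $s,x_i,y_i\in\mathbb{X}^*$ (maximal length of a possibly overlapping repeat). *)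

theory Defs
  imports Main
begin

text \<open>Symbols of a grammar: terminals from the alphabet, or nonterminals.
  Nonterminal A_(i+1) of the paper is represented by N i (0-based), so the
  start symbol A_1 is N 0.\<close>
datatype 'x sym = T 'x | N nat

text \<open>A grammar (alpha_1,...,alpha_n) is the list of right-hand sides;
  G ! i is the right-hand side of nonterminal N i.\<close>
type_synonym 'x grammar = "'x sym list list"

definition admissible :: "'x grammar \<Rightarrow> bool" where
  "admissible G \<longleftrightarrow> G \<noteq> [] \<and>
     (\<forall>i < length G. \<forall>s \<in> set (G ! i).
        (case s of T _ \<Rightarrow> True | N j \<Rightarrow> i < j \<and> j < length G))"

text \<open>Expansion with a depth bound (sufficient for admissible grammars,
  since every rule only refers to strictly later nonterminals).\<close>
primrec expand :: "nat \<Rightarrow> 'x grammar \<Rightarrow> nat \<Rightarrow> 'x list" where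
  "expand 0 G i = []"
| "expand (Suc k) G i =
     concat (map (\<lambda>s. case s of T x \<Rightarrow> [x] | N j \<Rightarrow> expand k G j) (G ! i))"

definition generated :: "'x grammar \<Rightarrow> 'x list" where
  "generated G = expand (length G) G 0"

definition grammars :: "'x list \<Rightarrow> 'x grammar set" where
  "grammars w = {G. admissible G \<and> generated G = w}"

definition V :: "'x grammar \<Rightarrow> nat" where
  "V G = length G"

definition yk_len :: "'x grammar \<Rightarrow> nat" where
  "yk_len G = sum_list (map length G)"

text \<open>L(w): maximal length of a (possibly overlapping) repeat
  (0 if there is none, i.e. for the empty string).\<close>
definition maxrep :: "'x list \<Rightarrow> nat" where
  "maxrep w = Sup {length s | s. \<exists>x1 y1 x2 y2.
      w = x1 @ s @ y1 \<and> w = x2 @ s @ y2 \<and> x1 \<noteq> x2}"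

definition yk_minimal_transform :: "('x list \<Rightarrow> 'x grammar) \<Rightarrow> bool" where
  "yk_minimal_transform \<Gamma> \<longleftrightarrow> (\<forall>w.
     \<Gamma> w \<in> grammars w \<and>
     yk_len (\<Gamma> w) = Inf (yk_len ` grammars w) \<and>
     (\<forall>i. 1 \<le> i \<and> i < length (\<Gamma> w) \<longrightarrow> \<Gamma> w ! i \<noteq> []))"

end

theory Submission imports Defs begin

function E :: "'x grammar \<Rightarrow> nat \<Rightarrow> 'x list" where
 "E G i = (if i < length G then concat (map (\<lambda>s. case s of T x \<Rightarrow> [x] | N j \<Rightarrow> if i < j then E G j else []) (G ! i)) else [])"
  by pat_completeness auto
termination by (relation "measure (\<lambda>(G,i). length G - i)") auto

declare E.simps[simp del]

definition SE :: "'x grammar \<Rightarrow> 'x sym \<Rightarrow> 'x list" where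
  "SE G s = (case s of T x \<Rightarrow> [x] | N j \<Rightarrow> E G j)"

lemma SE_T[simp]: "SE G (T x) = [x]" and SE_N[simp]: "SE G (N j) = E G j"
  by (simp_all add: SE_def)

lemma adm_N: "admissible G \<Longrightarrow> i < length G \<Longrightarrow> N j \<in> set (G!i) \<Longrightarrow> i < j \<and> j < length G"
  unfolding admissible_def by fastforce

lemma E_unfold: "admissible G \<Longrightarrow> i < length G \<Longrightarrow> E G i = concat (map (SE G) (G!i))"
  apply (subst E.simps)
  apply simp
  apply (rule arg_cong[where f=concat])
  apply (rule map_cong, rule refl)
  subgoal for s by (cases s) (auto dest: adm_N)
  done

lemma expand_E: "admissible G \<Longrightarrow> i < length G \<Longrightarrow> length G - i \<le> k \<Longrightarrow> expand k G i = E G i"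
proof (induction k arbitrary: i)
  case 0 then show ?case by simp
next
  case (Suc k)
  have "expand (Suc k) G i = concat (map (SE G) (G!i))"
    apply simp
    apply (rule arg_cong[where f=concat])
    apply (rule map_cong, rule refl)
    subgoal for s using Suc adm_N[OF Suc.prems(1,2), of ] by (cases s) force+
    done
  then show ?case using E_unfold Suc.prems by metis
qed

lemma generated_E: "admissible G \<Longrightarrow> generated G = E G 0"
  unfolding generated_def by (rule expand_E) (auto simp: admissible_def)


definition shift :: "(nat \<Rightarrow> nat) \<Rightarrow> 'x sym \<Rightarrow> 'x sym" where
  "shift f s = (case s of T x \<Rightarrow> T x | N j \<Rightarrow> N (f j))"

lemma shift_simps[simp]: "shift f (T x) = T x" "shift f (N j) = N (f j)"
  by (simp_all add: shift_def)

lemma map_shift_id[simp]: "map (shift (\<lambda>j. j)) r = r"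
  by (induct r) (auto simp: shift_def split: sym.splits)

lemma sim:
  assumes aG: "admissible G" and aC: "admissible C"
    and rules: "\<And>i. i \<in> I \<Longrightarrow> i < length G \<and> f i < length C \<and> C!(f i) = map (shift f) (G!i)"
    and closed: "\<And>i j. i \<in> I \<Longrightarrow> N j \<in> set (G!i) \<Longrightarrow> j \<in> I"
    and iI: "i \<in> I"
  shows "E C (f i) = E G i"
  using iI
proof (induction i rule: measure_induct_rule[where f="\<lambda>i. length G - i"])
  case (less i)
  from rules[OF less.prems] have r: "i < length G" "f i < length C" "C!(f i) = map (shift f) (G!i)" by auto
  have "E C (f i) = concat (map (SE C) (map (shift f) (G!i)))"
    using E_unfold[OF aC r(2)] r(3) by simp
  also have "\<dots> = concat (map (SE G) (G!i))"
    apply (simp add: comp_def)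
    apply (rule arg_cong[where f=concat])
    apply (rule map_cong, rule refl)
    subgoal premises sp for s
    proof (cases s)
      case (N j)
      with adm_N[OF aG r(1)] have "i < j" "j < length G" using sp by auto
      moreover have "j \<in> I" using closed less.prems N sp by auto
      ultimately show ?thesis using less.IH[of j] N by simp
    qed simp
    done
  also have "\<dots> = E G i" using E_unfold[OF aG r(1)] by simp
  finally show ?case .
qed

lemma E_nonempty:
  assumes aG: "admissible G" and ne: "\<And>i. 1 \<le> i \<Longrightarrow> i < length G \<Longrightarrow> G!i \<noteq> []"
  shows "1 \<le> i \<Longrightarrow> i < length G \<Longrightarrow> (\<forall>s\<in>set (G!i). SE G s \<noteq> []) \<and> E G i \<noteq> [] \<and> length (G!i) \<le> length (E G i)"
proof (induction i rule: measure_induct_rule[where f="\<lambda>i. length G - i"])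
  case (less i)
  have all: "\<forall>s\<in>set (G!i). SE G s \<noteq> []"
  proof
    fix s assume s: "s \<in> set (G!i)"
    show "SE G s \<noteq> []"
    proof (cases s)
      case (N j)
      with adm_N[OF aG less.prems(2)] s have "i < j" "j < length G" by auto
      then show ?thesis using less.IH[of j] less.prems N by simp
    qed simp
  qed
  have len: "\<And>r. \<forall>s\<in>set r. SE G s \<noteq> [] \<Longrightarrow> length r \<le> length (concat (map (SE G) r))"
  proof -
    fix r :: "'a sym list" show "\<forall>s\<in>set r. SE G s \<noteq> [] \<Longrightarrow> length r \<le> length (concat (map (SE G) r))"
      by (induct r) (auto simp: Suc_le_eq length_greater_0_conv[symmetric] simp del: length_greater_0_conv)
  qed
  have "length (G!i) \<le> length (E G i)" using len[OF all] E_unfold[OF aG less.prems(2)] by simp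
  moreover have "G!i \<noteq> []" using ne less.prems by auto
  ultimately show ?case using all by auto
qed

lemma concat_split:
  "concat L = u @ v \<Longrightarrow> v \<noteq> [] \<Longrightarrow> \<exists>xs l ys p q. L = xs @ l # ys \<and> u = concat xs @ p \<and> l = p @ q \<and> v = q @ concat ys"
proof (induction L arbitrary: u)
  case Nil then show ?case by simp
next
  case (Cons l L)
  show ?case
  proof (cases "length u < length l")
    case True
    from Cons.prems(1) have "l @ concat L = u @ v" by simp
    then obtain q where "l = u @ q" "v = q @ concat L" using True
      by (auto simp: append_eq_append_conv2)
    then show ?thesis by (metis append_Nil concat.simps(1) self_append_conv2)
  next
    case False
    from Cons.prems(1) have "l @ concat L = u @ v" by simp
    then obtain u' where "u = l @ u'" "concat L = u' @ v" using False
      by (auto simp: append_eq_append_conv2)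
    from Cons.IH[OF this(2) Cons.prems(2)] obtain xs l' ys p q where
      "L = xs @ l' # ys" "u' = concat xs @ p" "l' = p @ q" "v = q @ concat ys" by blast
    then show ?thesis using \<open>u = l @ u'\<close>
      by (intro exI[of _ "l # xs"] exI[of _ l'] exI[of _ ys] exI[of _ p] exI[of _ q]) auto
  qed
qed

lemma count2: "2 \<le> count_list xs x \<Longrightarrow> \<exists>a b c. xs = a @ x # b @ x # c"
proof (induction xs)
  case Nil then show ?case by simp
next
  case (Cons y xs)
  show ?case
  proof (cases "y = x")
    case True
    then have "1 \<le> count_list xs x" using Cons.prems by simp
    then have "x \<in> set xs" by (metis count_notin not_one_le_zero)
    then obtain b c where "xs = b @ x # c" by (meson split_list)
    then show ?thesis using True by (intro exI[of _ "[]"] exI[of _ b] exI[of _ c]) auto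
  next
    case False
    then obtain a b c where "xs = a @ x # b @ x # c" using Cons by auto
    then show ?thesis by (intro exI[of _ "y # a"] exI[of _ b] exI[of _ c]) auto
  qed
qed


lemma yk_len_sum: "yk_len G = (\<Sum>i<length G. length (G!i))"
  unfolding yk_len_def by (simp add: sum_list_sum_nth atLeast0LessThan)

lemma len_inline: "length (concat (map (\<lambda>s. if s = x then r else [s]) xs)) + count_list xs x
   = length xs + count_list xs x * length r"
  by (induct xs) auto

lemma concat_map_concat: "concat (map f (concat (map g xs))) = concat (map (\<lambda>t. concat (map f (g t))) xs)"
  by (induct xs) auto

lemma inline_count:
  assumes aG: "admissible G" and k: "1 \<le> k" "k < length G" and nek: "G!k \<noteq> []"
    and mn: "\<And>G'. admissible G' \<Longrightarrow> E G' 0 = E G 0 \<Longrightarrow> yk_len G \<le> yk_len G'"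
  shows "2 \<le> (\<Sum>i<length G. count_list (G!i) (N k))"
proof -
  define g where "g s = (if s = N k then G!k else [s])" for s
  define G' where "G' = (map (\<lambda>r. concat (map g r)) G)[k := []]"
  have lenG': "length G' = length G" by (simp add: G'_def)
  have G'i: "i < length G \<Longrightarrow> G'!i = (if i = k then [] else concat (map g (G!i)))" for i
    by (simp add: G'_def)
  have aG': "admissible G'"
    unfolding admissible_def
  proof (intro conjI allI impI ballI)
    show "G' \<noteq> []" using lenG' k by auto
  next
    fix i s assume i: "i < length G'" and s: "s \<in> set (G'!i)"
    show "case s of T x \<Rightarrow> True | N j \<Rightarrow> i < j \<and> j < length G'"
    proof (cases s)
      case (N j)
      from i s G'i lenG' have ik: "i \<noteq> k" and "s \<in> set (concat (map g (G!i)))" by (auto split: if_splits)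
      then obtain t where t: "t \<in> set (G!i)" "s \<in> set (g t)" by auto
      show ?thesis
      proof (cases "t = N k")
        case True
        with t have "s \<in> set (G!k)" by (simp add: g_def)
        with adm_N[OF aG k(2)] N have "k < j" "j < length G" by auto
        moreover have "i < k" using adm_N[OF aG _ t(1)[unfolded True]] i lenG' by auto
        ultimately show ?thesis using N lenG' by simp
      next
        case False
        with t have "s = t" by (simp add: g_def)
        then have tj: "N j \<in> set (G!i)" using t N by simp
        then show ?thesis using adm_N[OF aG _ tj] N i lenG' by auto
      qed
    qed simp
  qed
  have EE: "i < length G \<Longrightarrow> i \<noteq> k \<Longrightarrow> E G' i = E G i" for i
  proof (induction i rule: measure_induct_rule[where f="\<lambda>i. length G - i"])
    case (less i)
    have "E G' i = concat (map (SE G') (concat (map g (G!i))))"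
      using E_unfold[OF aG'] less.prems lenG' G'i by simp
    also have "\<dots> = concat (map (\<lambda>t. concat (map (SE G') (g t))) (G!i))"
      by (rule concat_map_concat)
    also have "\<dots> = concat (map (SE G) (G!i))"
      apply (rule arg_cong[where f=concat])
      apply (rule map_cong, rule refl)
      subgoal premises sp for t
      proof (cases "t = N k")
        case True
        have ik: "i < k" using adm_N[OF aG less.prems(1) sp[unfolded True]] by simp
        have "concat (map (SE G') (G!k)) = concat (map (SE G) (G!k))"
          apply (rule arg_cong[where f=concat])
          apply (rule map_cong, rule refl)
          subgoal premises sp2 for s
          proof (cases s)
            case (N j)
            with adm_N[OF aG k(2)] sp2 have "k < j" "j < length G" by auto
            then show ?thesis using less.IH[of j] N ik by simp
          qed simp
          done
        then show ?thesis using True E_unfold[OF aG k(2)] by (simp add: g_def)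
      next
        case False
        then have "g t = [t]" by (simp add: g_def)
        moreover have "SE G' t = SE G t"
        proof (cases t)
          case (N j)
          with adm_N[OF aG less.prems(1)] sp have "i < j" "j < length G" by auto
          then show ?thesis using less.IH[of j] N False by simp
        qed simp
        ultimately show ?thesis by simp
      qed
      done
    also have "\<dots> = E G i" using E_unfold[OF aG less.prems(1)] by simp
    finally show ?case .
  qed
  have "E G' 0 = E G 0" using EE[of 0] k by fastforce
  from mn[OF aG' this] have le: "yk_len G \<le> yk_len G'" .
  define m where "m = (\<Sum>i<length G. count_list (G!i) (N k))"
  define l where "l = length (G!k)"
  have ckk: "count_list (G!k) (N k) = 0"
    using adm_N[OF aG k(2), of k] by (auto simp add: count_list_0_iff)
  have each: "i < length G \<Longrightarrow> length (G'!i) + count_list (G!i) (N k) + (if i = k then l else 0)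
      = length (G!i) + count_list (G!i) (N k) * l" for i
    using len_inline[of "N k" "G!k" "G!i"] G'i ckk unfolding g_def l_def by auto
  have "(\<Sum>i<length G. length (G'!i) + count_list (G!i) (N k) + (if i = k then l else 0))
      = (\<Sum>i<length G. length (G!i) + count_list (G!i) (N k) * l)"
    using each by (intro sum.cong) auto
  then have "yk_len G' + m + l = yk_len G + m * l"
    using k by (simp add: sum.distrib yk_len_sum lenG' m_def sum_distrib_right)
  with le have "m + l \<le> m * l" by simp
  moreover have "l \<ge> 1" using nek by (simp add: l_def Suc_le_eq)
  ultimately show ?thesis unfolding m_def[symmetric]
    by (cases m; cases "m - 1") auto
qed


inductive occ :: "'x grammar \<Rightarrow> nat \<Rightarrow> nat \<Rightarrow> bool" for G where
  base: "occ G 0 0"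
| step: "occ G i p \<Longrightarrow> i < length G \<Longrightarrow> G!i = a @ N j # b \<Longrightarrow> occ G j (p + length (concat (map (SE G) a)))"

lemma occ_sub: "occ G i p \<Longrightarrow> admissible G \<Longrightarrow> i < length G \<and> (\<exists>x y. E G 0 = x @ E G i @ y \<and> length x = p)"
proof (induction rule: occ.induct)
  case base then show ?case by (auto simp: admissible_def)
next
  case (step i p a j b)
  then obtain x y where xy: "E G 0 = x @ E G i @ y" "length x = p" by auto
  have ij: "i < j" "j < length G" using adm_N[OF step.prems step.hyps(2), of j] step.hyps(3) by auto
  have "E G i = concat (map (SE G) a) @ E G j @ concat (map (SE G) b)"
    using E_unfold[OF step.prems step.hyps(2)] step.hyps(3) by simp
  then show ?case using xy ij
    by (intro conjI exI[of _ "x @ concat (map (SE G) a)"] exI[of _ "concat (map (SE G) b) @ y"]) auto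
qed

lemma occ2:
  assumes aG: "admissible G" and ne: "\<And>i. 1 \<le> i \<Longrightarrow> i < length G \<Longrightarrow> G!i \<noteq> []"
    and cnt: "\<And>k. 1 \<le> k \<Longrightarrow> k < length G \<Longrightarrow> 2 \<le> (\<Sum>i<length G. count_list (G!i) (N k))"
  shows "1 \<le> k \<Longrightarrow> k < length G \<Longrightarrow> \<exists>p1 p2. p1 \<noteq> p2 \<and> occ G k p1 \<and> occ G k p2"
proof (induction k rule: less_induct)
  case (less k)
  show ?case
  proof (cases "\<exists>i. 1 \<le> i \<and> i < length G \<and> N k \<in> set (G!i)")
    case True
    then obtain i where i: "1 \<le> i" "i < length G" "N k \<in> set (G!i)" by auto
    have "i < k" using adm_N[OF aG i(2,3)] by simp
    from less.IH[OF this i(1)] i obtain p1 p2 where p: "p1 \<noteq> p2" "occ G i p1" "occ G i p2" by auto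
    obtain a b where ab: "G!i = a @ N k # b" using i(3) by (meson split_list)
    let ?o = "length (concat (map (SE G) a))"
    have "p1 + ?o \<noteq> p2 + ?o" using p(1) by simp
    then show ?thesis using occ.step[OF p(2) i(2) ab] occ.step[OF p(3) i(2) ab] by blast
  next
    case False
    have n0: "0 < length G" using less.prems by linarith
    have "(\<Sum>i<length G. count_list (G!i) (N k)) = count_list (G!0) (N k) + (\<Sum>i\<in>{..<length G} - {0}. count_list (G!i) (N k))"
      using n0 by (intro sum.remove) auto
    also have "(\<Sum>i\<in>{..<length G} - {0}. count_list (G!i) (N k)) = 0"
      using False by (intro sum.neutral) (auto simp: count_list_0_iff Suc_le_eq)
    finally have "2 \<le> count_list (G!0) (N k)" using cnt[OF less.prems] by simp
    then obtain a b c where abc: "G!0 = a @ N k # b @ N k # c" using count2 by metis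
    have o1: "occ G k (0 + length (concat (map (SE G) a)))"
      using occ.step[OF occ.base n0 abc] .
    have o2: "occ G k (0 + length (concat (map (SE G) (a @ N k # b))))"
      using occ.step[OF occ.base n0, of "a @ N k # b" k c] abc by simp
    have "E G k \<noteq> []" using E_nonempty[OF aG ne less.prems] by simp
    then have "length (concat (map (SE G) a)) \<noteq> length (concat (map (SE G) (a @ N k # b)))" by simp
    then have "0 + length (concat (map (SE G) a)) \<noteq> 0 + length (concat (map (SE G) (a @ N k # b)))" by simp
    then show ?thesis using o1 o2 by blast
  qed
qed

lemma maxrep_ge:
  assumes "w = x1 @ s @ y1" "w = x2 @ s @ y2" "x1 \<noteq> x2"
  shows "length s \<le> maxrep w"
proof -
  let ?S = "{length s | s. \<exists>x1 y1 x2 y2. w = x1 @ s @ y1 \<and> w = x2 @ s @ y2 \<and> x1 \<noteq> x2}"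
  have "length s \<in> ?S" apply (rule CollectI) apply (rule exI[of _ s]) using assms by blast
  moreover have "bdd_above ?S"
  proof (rule bdd_aboveI[of _ "length w"])
    fix z assume "z \<in> ?S"
    then obtain s' x y where "z = length s'" "w = x @ s' @ y" by blast
    then show "z \<le> length w" by simp
  qed
  ultimately show ?thesis unfolding maxrep_def by (rule cSup_upper)
qed

lemma rep_bound:
  assumes aG: "admissible G" and ne: "\<And>i. 1 \<le> i \<Longrightarrow> i < length G \<Longrightarrow> G!i \<noteq> []"
    and cnt: "\<And>k. 1 \<le> k \<Longrightarrow> k < length G \<Longrightarrow> 2 \<le> (\<Sum>i<length G. count_list (G!i) (N k))"
    and k: "1 \<le> k" "k < length G"
  shows "length (E G k) \<le> maxrep (E G 0)"
proof -
  obtain p1 p2 where p: "p1 \<noteq> p2" "occ G k p1" "occ G k p2" using occ2[OF aG ne cnt k] by blast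
  obtain x1 y1 where 1: "E G 0 = x1 @ E G k @ y1" "length x1 = p1" using occ_sub[OF p(2) aG] by blast
  obtain x2 y2 where 2: "E G 0 = x2 @ E G k @ y2" "length x2 = p2" using occ_sub[OF p(3) aG] by blast
  show ?thesis using maxrep_ge[OF 1(1) 2(1)] 1(2) 2(2) p(1) by blast
qed


lemma yk_len_cons: "yk_len (r # G) = length r + sum_list (map length G)"
  by (simp add: yk_len_def)

lemma concat_grammar:
  assumes a1: "admissible G1" and a2: "admissible G2"
  shows "\<exists>C. admissible C \<and> E C 0 = E G1 0 @ E G2 0 \<and> yk_len C = yk_len G1 + yk_len G2"
proof -
  define n1 where "n1 = length G1"
  define n2 where "n2 = length G2"
  have n1: "1 \<le> n1" and n2: "1 \<le> n2" using a1 a2 by (auto simp: admissible_def n1_def n2_def Suc_le_eq)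
  have G1ne: "G1 \<noteq> []" and G2ne: "G2 \<noteq> []" using a1 a2 by (auto simp: admissible_def)
  define k1 where "k1 = n1 - 1"
  define f2 where "f2 t = t + k1" for t
  define C where "C = (G1!0 @ map (shift f2) (G2!0)) # tl G1 @ map (map (shift f2)) (tl G2)"
  have lenC: "length C = n1 + n2 - 1" using n1 n2 by (simp add: C_def n1_def n2_def)
  have Cnth: "C!i = (if i = 0 then G1!0 @ map (shift f2) (G2!0) else if i < n1 then G1!i else map (shift f2) (G2!(i - k1)))"
    if i: "i < length C" for i
  proof (cases "i = 0")
    case True then show ?thesis by (simp add: C_def)
  next
    case False
    then have "C!i = (tl G1 @ map (map (shift f2)) (tl G2)) ! (i - 1)" by (simp add: C_def nth_Cons')
    also have "\<dots> = (if i < n1 then G1!i else map (shift f2) (G2!(i - k1)))"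
    proof (cases "i < n1")
      case True
      then have "i - 1 < length (tl G1)" using False by (simp add: n1_def)
      then show ?thesis using False True by (simp add: nth_append nth_tl)
    next
      case False': False
      have lt: "length (tl G1) = n1 - 1" by (simp add: n1_def)
      have idx: "i - 1 - (n1 - 1) = i - n1" "\<not> i - 1 < n1 - 1" "Suc (i - n1) = i - k1"
        using False False' n1 by (auto simp: k1_def)
      have il: "i - n1 < length (tl G2)" using i lenC False' n2 by (simp add: n2_def)
      have "(tl G1 @ map (map (shift f2)) (tl G2)) ! (i - 1) = map (map (shift f2)) (tl G2) ! (i - n1)"
        by (subst nth_append) (simp only: lt idx if_False)
      also have "\<dots> = map (shift f2) (G2 ! (i - k1))"
        using il idx(3) by (simp add: nth_tl)
      finally show ?thesis using False' by simp
    qed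
    finally show ?thesis using False by simp
  qed
  have aC: "admissible C"
    unfolding admissible_def
  proof (intro conjI allI impI ballI)
    show "C \<noteq> []" by (simp add: C_def)
  next
    fix i s assume i: "i < length C" and s: "s \<in> set (C!i)"
    show "case s of T x \<Rightarrow> True | N j \<Rightarrow> i < j \<and> j < length C"
    proof (cases s)
      case (N j)
      consider (z) "i = 0" | (one) "i \<noteq> 0" "i < n1" | (two) "\<not> i < n1" using n1 by linarith
      then show ?thesis
      proof cases
        case z
        with s Cnth[OF i] have "s \<in> set (G1!0) \<or> s \<in> set (map (shift f2) (G2!0))" by simp
        then show ?thesis
        proof
          assume "s \<in> set (G1!0)"
          then show ?thesis using G1ne G2ne adm_N[OF a1, of 0 j] N n1 n2 z lenC by (auto simp: n1_def)
        next
          assume "s \<in> set (map (shift f2) (G2!0))"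
          then obtain t where t: "t \<in> set (G2!0)" "s = shift f2 t" by auto
          have "shift f2 t = N j" using t(2) N by simp
          then obtain j' where "t = N j'" "j = j' + k1" by (cases t) (auto simp: f2_def)
          then show ?thesis using G1ne G2ne adm_N[OF a2, of 0 j'] t N n1 n2 z lenC by (auto simp: n2_def k1_def)
        qed
      next
        case one
        with s Cnth[OF i] have "s \<in> set (G1!i)" by simp
        then show ?thesis using G1ne G2ne adm_N[OF a1, of i j] N one lenC n2 by (auto simp: n1_def)
      next
        case two
        with s Cnth[OF i] n1 have "s \<in> set (map (shift f2) (G2!(i-k1)))" by (simp add: k1_def)
        then obtain t where t: "t \<in> set (G2!(i-k1))" "s = shift f2 t" by auto
        have "shift f2 t = N j" using t(2) N by simp
          then obtain j' where "t = N j'" "j = j' + k1" by (cases t) (auto simp: f2_def)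
        moreover have "i - k1 < length G2" using i lenC two n2 by (simp add: k1_def n2_def)
        ultimately show ?thesis using G1ne G2ne adm_N[OF a2, of "i-k1" j'] t N n1 two lenC
          by (auto simp: n2_def k1_def)
      qed
    qed simp
  qed
  have E1: "E C j = E G1 j" if "j \<in> {1..<n1}" for j
  proof -
    have "E C ((\<lambda>j. j) j) = E G1 j"
    proof (rule sim[OF a1 aC, of "{1..<n1}"])
      fix i assume "i \<in> {1..<n1}"
      then show "i < length G1 \<and> i < length C \<and> C ! i = map (shift (\<lambda>j. j)) (G1 ! i)"
        using Cnth[of i] lenC n2 by (auto simp: n1_def)
    next
      fix i j assume "i \<in> {1..<n1}" "N j \<in> set (G1!i)"
      then show "j \<in> {1..<n1}" using G1ne G2ne adm_N[OF a1, of i j] by (auto simp: n1_def)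
    qed (rule that)
    then show ?thesis by simp
  qed
  have E2: "E C (f2 j) = E G2 j" if "j \<in> {1..<n2}" for j
  proof (rule sim[OF a2 aC, of "{1..<n2}"])
    fix i assume i: "i \<in> {1..<n2}"
    then have "f2 i < length C" "\<not> f2 i < n1" "f2 i \<noteq> 0" "f2 i - k1 = i" using lenC n1 by (auto simp: f2_def k1_def)
    then show "i < length G2 \<and> f2 i < length C \<and> C ! (f2 i) = map (shift f2) (G2 ! i)"
      using Cnth[of "f2 i"] i by (auto simp: n2_def)
  next
    fix i j assume "i \<in> {1..<n2}" "N j \<in> set (G2!i)"
    then show "j \<in> {1..<n2}" using G1ne G2ne adm_N[OF a2, of i j] by (auto simp: n2_def)
  qed (rule that)
  have "E C 0 = concat (map (SE C) (G1!0 @ map (shift f2) (G2!0)))"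
    using E_unfold[OF aC, of 0] Cnth[of 0] by (simp add: C_def)
  also have "\<dots> = concat (map (SE G1) (G1!0)) @ concat (map (SE G2) (G2!0))"
  proof -
    have "map (SE C) (G1!0) = map (SE G1) (G1!0)"
    proof (rule map_cong[OF refl])
      fix s assume s: "s \<in> set (G1!0)"
      show "SE C s = SE G1 s"
      proof (cases s)
        case (N j) then show ?thesis using G1ne G2ne adm_N[OF a1, of 0 j] s E1[of j] n1 by (fastforce simp: n1_def)
      qed simp
    qed
    moreover have "map (SE C) (map (shift f2) (G2!0)) = map (SE G2) (G2!0)"
      unfolding map_map
    proof (rule map_cong[OF refl])
      fix s assume s: "s \<in> set (G2!0)"
      show "(SE C \<circ> shift f2) s = SE G2 s"
      proof (cases s)
        case (N j) then show ?thesis using G1ne G2ne adm_N[OF a2, of 0 j] s E2[of j] n2 by (fastforce simp: n2_def)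
      qed simp
    qed
    ultimately show ?thesis by (simp del: map_eq_conv)
  qed
  also have "\<dots> = E G1 0 @ E G2 0"
    using E_unfold[OF a1, of 0] E_unfold[OF a2, of 0] G1ne G2ne by simp
  finally have EC: "E C 0 = E G1 0 @ E G2 0" .
  have "G1 = G1!0 # tl G1" using n1 by (cases G1) (auto simp: n1_def)
  then have y1: "yk_len G1 = length (G1!0) + sum_list (map length (tl G1))" by (metis yk_len_cons)
  have "G2 = G2!0 # tl G2" using n2 by (cases G2) (auto simp: n2_def)
  then have y2: "yk_len G2 = length (G2!0) + sum_list (map length (tl G2))" by (metis yk_len_cons)
  have "yk_len C = yk_len G1 + yk_len G2"
    unfolding y1 y2 C_def yk_len_cons by (simp add: comp_def)
  then show ?thesis using aC EC by blast
qed


lemma replace_start: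
  assumes aG: "admissible G" and r: "\<And>j. N j \<in> set r \<Longrightarrow> 0 < j \<and> j < length G"
  shows "admissible (r # tl G) \<and> E (r # tl G) 0 = concat (map (SE G) r)"
proof -
  define G' where "G' = r # tl G"
  have n: "G \<noteq> []" using aG by (simp add: admissible_def)
  have len: "length G' = length G" using n by (simp add: G'_def)
  have nth: "i \<noteq> 0 \<Longrightarrow> G'!i = G!i" for i using n by (cases G; cases i) (auto simp: G'_def)
  have aG': "admissible G'"
    unfolding admissible_def
  proof (intro conjI allI impI ballI)
    show "G' \<noteq> []" by (simp add: G'_def)
  next
    fix i s assume i: "i < length G'" and s: "s \<in> set (G'!i)"
    show "case s of T x \<Rightarrow> True | N j \<Rightarrow> i < j \<and> j < length G'"
    proof (cases s)
      case (N j)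
      show ?thesis
      proof (cases "i = 0")
        case True then show ?thesis using s N r len by (simp add: G'_def)
      next
        case False then show ?thesis using s N nth adm_N[OF aG, of i j] i len by simp
      qed
    qed simp
  qed
  have EE: "E G' j = E G j" if "j \<in> {1..<length G}" for j
  proof -
    have "E G' ((\<lambda>j. j) j) = E G j"
    proof (rule sim[OF aG aG', of "{1..<length G}"])
      fix i assume "i \<in> {1..<length G}"
      then show "i < length G \<and> i < length G' \<and> G' ! i = map (shift (\<lambda>j. j)) (G ! i)"
        using nth[of i] len by auto
    next
      fix i j assume "i \<in> {1..<length G}" "N j \<in> set (G!i)"
      then show "j \<in> {1..<length G}" using adm_N[OF aG, of i j] by auto
    qed (rule that)
    then show ?thesis by simp
  qed
  have "E G' 0 = concat (map (SE G') r)" using E_unfold[OF aG', of 0] by (simp add: G'_def)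
  also have "map (SE G') r = map (SE G) r"
  proof (rule map_cong[OF refl])
    fix s assume s: "s \<in> set r"
    show "SE G' s = SE G s"
    proof (cases s)
      case (N j) then show ?thesis using r[of j] s EE[of j] by simp
    qed simp
  qed
  finally show ?thesis using aG' by (simp add: G'_def)
qed

lemma sum_list_bound: "(\<And>x. x \<in> set xs \<Longrightarrow> f x \<le> c) \<Longrightarrow> sum_list (map f xs) \<le> length xs * c"
  by (induct xs) (auto simp: add_mono)

theorem theorem4:
  fixes \<Gamma> :: "('x::finite) list \<Rightarrow> 'x grammar"
    and u v w :: "'x list"
  assumes "yk_minimal_transform \<Gamma>"
    and "w = u @ v"
  shows "0 \<le> int (yk_len (\<Gamma> u)) + int (yk_len (\<Gamma> v)) - int (yk_len (\<Gamma> w))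
       \<and> int (yk_len (\<Gamma> u)) + int (yk_len (\<Gamma> v)) - int (yk_len (\<Gamma> w))
           \<le> int (V (\<Gamma> w) * maxrep w)"
proof -
  have mem: "admissible (\<Gamma> x) \<and> E (\<Gamma> x) 0 = x" for x
  proof -
    have "\<Gamma> x \<in> grammars x" using assms(1) unfolding yk_minimal_transform_def by blast
    then have "admissible (\<Gamma> x)" "generated (\<Gamma> x) = x" by (auto simp: grammars_def)
    then show ?thesis using generated_E by metis
  qed
  have mn: "\<And>x G'. admissible G' \<Longrightarrow> E G' 0 = x \<Longrightarrow> yk_len (\<Gamma> x) \<le> yk_len G'"
  proof -
    fix x and G' :: "'x grammar" assume "admissible G'" "E G' 0 = x"
    then have "G' \<in> grammars x" by (simp add: grammars_def generated_E)
    then have "Inf (yk_len ` grammars x) \<le> yk_len G'" by (intro cInf_lower) auto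
    then show "yk_len (\<Gamma> x) \<le> yk_len G'" using assms(1) unfolding yk_minimal_transform_def by metis
  qed
  have nerule: "\<And>x i. 1 \<le> i \<Longrightarrow> i < length (\<Gamma> x) \<Longrightarrow> \<Gamma> x ! i \<noteq> []"
    using assms(1) unfolding yk_minimal_transform_def by blast
  obtain C where C: "admissible C" "E C 0 = E (\<Gamma> u) 0 @ E (\<Gamma> v) 0" "yk_len C = yk_len (\<Gamma> u) + yk_len (\<Gamma> v)"
    using concat_grammar[of "\<Gamma> u" "\<Gamma> v"] mem by blast
  have low: "yk_len (\<Gamma> w) \<le> yk_len (\<Gamma> u) + yk_len (\<Gamma> v)"
    using mn[OF C(1), of w] C(2,3) mem assms(2) by simp
  define G where "G = \<Gamma> w"
  define n where "n = length G"
  define L where "L = maxrep w"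
  have aG: "admissible G" and wG: "E G 0 = w" using mem by (auto simp: G_def)
  have n1: "1 \<le> n" using aG by (auto simp: admissible_def n_def Suc_le_eq)
  have neG: "\<And>i. 1 \<le> i \<Longrightarrow> i < length G \<Longrightarrow> G!i \<noteq> []" using nerule by (simp add: G_def)
  have cnt: "\<And>k. 1 \<le> k \<Longrightarrow> k < length G \<Longrightarrow> 2 \<le> (\<Sum>i<length G. count_list (G!i) (N k))"
    using inline_count[OF aG _ _ neG] mn[of _ w] wG by (simp add: G_def)
  have EL: "\<And>k. 1 \<le> k \<Longrightarrow> k < n \<Longrightarrow> length (E G k) \<le> L"
    using rep_bound[OF aG neG cnt] wG by (simp add: L_def n_def)
  define R where "R = sum_list (map length (tl G))"
  have "R \<le> length (tl G) * L" unfolding R_def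
  proof (rule sum_list_bound)
    fix x assume "x \<in> set (tl G)"
    then obtain t where t: "t < length (tl G)" "x = tl G ! t" by (auto simp: in_set_conv_nth)
    then have x: "x = G ! Suc t" "Suc t < n" by (auto simp: nth_tl n_def)
    then show "length x \<le> L" using E_nonempty[OF aG neG, of "Suc t"] EL[of "Suc t"] by (simp add: n_def)
  qed
  then have RL: "R \<le> (n - 1) * L" by (simp add: n_def)
  have GG: "G = G!0 # tl G" using n1 by (cases G) (auto simp: n_def)
  have yG: "yk_len G = length (G!0) + R" unfolding R_def by (subst GG) (simp add: yk_len_cons)
  have up: "yk_len (\<Gamma> u) + yk_len (\<Gamma> v) \<le> yk_len G + n * L"
  proof (cases "v = []")
    case True
    have "admissible ([[]] :: 'x grammar)" by (simp add: admissible_def)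
    moreover have "E ([[]] :: 'x grammar) 0 = []" by (simp add: E.simps)
    ultimately have "yk_len (\<Gamma> v) \<le> yk_len ([[]] :: 'x grammar)" using True by (intro mn) auto
    then have "yk_len (\<Gamma> v) = 0" by (simp add: yk_len_def)
    then show ?thesis using True assms(2) by (simp add: G_def)
  next
    case False
    have "concat (map (SE G) (G!0)) = u @ v" using E_unfold[OF aG, of 0] aG wG assms(2) by (simp add: admissible_def)
    from concat_split[OF this False] obtain xs l ys p q where
      sp: "map (SE G) (G!0) = xs @ l # ys" "u = concat xs @ p" "l = p @ q" "v = q @ concat ys" by metis
    obtain a r where ar: "G!0 = a @ r" "xs = map (SE G) a" "l # ys = map (SE G) r"
      using sp(1) unfolding map_eq_append_conv by metis
    obtain s b where sb: "r = s # b" "l = SE G s" "ys = map (SE G) b"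
      using ar(3) unfolding Cons_eq_map_conv by metis
    have abs: "G!0 = a @ s # b" "xs = map (SE G) a" "l = SE G s" "ys = map (SE G) b"
      using ar sb by auto
    have n0: "0 < length G" using aG by (simp add: admissible_def)
    have sym0: "0 < j \<and> j < n" if "N j \<in> set (G!0)" for j using adm_N[OF aG n0 that] by (simp add: n_def)
    have ru: "admissible ((a @ map T p) # tl G) \<and> E ((a @ map T p) # tl G) 0 = concat (map (SE G) (a @ map T p))"
      by (rule replace_start[OF aG]) (use sym0 abs(1) in \<open>auto simp: n_def\<close>)
    have rv: "admissible ((map T q @ b) # tl G) \<and> E ((map T q @ b) # tl G) 0 = concat (map (SE G) (map T q @ b))"
      by (rule replace_start[OF aG]) (use sym0 abs(1) in \<open>auto simp: n_def\<close>)
    have cT: "\<And>z. concat (map (SE G) (map T z)) = z" by (induct_tac z) auto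
    have "E ((a @ map T p) # tl G) 0 = u" using ru sp(2) abs(2) cT by simp
    then have "yk_len (\<Gamma> u) \<le> yk_len ((a @ map T p) # tl G)"
      using mn[OF conjunct1[OF ru]] by blast
    moreover have "E ((map T q @ b) # tl G) 0 = v" using rv sp(4) abs(4) cT by simp
    then have "yk_len (\<Gamma> v) \<le> yk_len ((map T q @ b) # tl G)"
      using mn[OF conjunct1[OF rv]] by blast
    moreover have "length (SE G s) \<le> 1 + L"
    proof (cases s)
      case (N j)
      then have "0 < j" "j < n" using sym0 abs(1) by auto
      then show ?thesis using EL[of j] N by simp
    qed simp
    ultimately have "yk_len (\<Gamma> u) + yk_len (\<Gamma> v) \<le> length a + length b + length (SE G s) + 2 * R"
      using sp(3) abs(3) by (simp add: yk_len_cons R_def)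
    also have "\<dots> \<le> yk_len G + L + R" using \<open>length (SE G s) \<le> 1 + L\<close> yG abs(1) by simp
    also have "\<dots> \<le> yk_len G + n * L" using RL n1 by (cases n) auto
    finally show ?thesis .
  qed
  have up': "yk_len (\<Gamma> u) + yk_len (\<Gamma> v) \<le> yk_len (\<Gamma> w) + V (\<Gamma> w) * maxrep w"
    using up by (simp add: G_def V_def n_def L_def)
  have i1: "int (yk_len (\<Gamma> w)) \<le> int (yk_len (\<Gamma> u)) + int (yk_len (\<Gamma> v))"
    using low by linarith
  have i2: "int (yk_len (\<Gamma> u)) + int (yk_len (\<Gamma> v)) \<le> int (yk_len (\<Gamma> w)) + int (V (\<Gamma> w) * maxrep w)"
    using up' by linarith
  show ?thesis using i1 i2 by linarith
qed

end
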